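(* Let $d \ge 3$ and $N\ge1$. Let $w_0$ be uniform on the unit sphere $\mathbb{S}^{d-1}$, independent of $N$ i.i.d. samples $(x^{(s)},y^{(s)})$ with $x^{(s)}$ uniform on $\{\pm1\}^d$ and $y^{(s)} = x^{(s)}_1x^{(s)}_2$, and let \[ q_0 := w_0^\top \widehat M w_0 = \frac1N\sum_{s=1}^N y^{(s)}\big(x^{(s)\top}w_0\big)^2 . \] Let $c_0 \in (0,\frac{\sqrt3}{2})$ and $p_{PZ}(c) := (1-1/\sqrt2)\cdot\frac{(1-\frac43c^2)^2}{3^8}$. Then \[ \Pr\Big[|q_0| \ge \frac{c_0}{\sqrt N}\Big] \ge p_{PZ}(c_0). \] For example, with $c_0 = \sqrt{3/8}$ one has $p_{PZ}(c_0) = \frac{2-\sqrt2}{8\cdot 3^8}$.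
   Context: $\widehat M := \frac1N\sum_{s=1}^N y^{(s)}x^{(s)}x^{(s)\top}$ is the empirical moment matrix of the samples. *)

theory Defs
  imports "HOL-Analysis.Analysis"
begin

text \<open>Vectors in R^d are represented as functions nat => real restricted to the
  index set {..<d} (coordinates 1..d of the paper are 0..d-1 here).\<close>

definition euclid_norm :: "nat \<Rightarrow> (nat \<Rightarrow> real) \<Rightarrow> real" where
  "euclid_norm d w = sqrt (\<Sum>i<d. (w i)^2)"

definition lebesgue_Rd :: "nat \<Rightarrow> (nat \<Rightarrow> real) measure" where
  "lebesgue_Rd d = PiM {..<d} (\<lambda>_. lborel)"

definition unit_ball :: "nat \<Rightarrow> (nat \<Rightarrow> real) set" where
  "unit_ball d = {w \<in> space (lebesgue_Rd d). euclid_norm d w \<le> 1}"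

text \<open>Uniform (normalised surface) measure on the unit sphere S^{d-1}, realised as the
  cone measure: the image of the uniform distribution on the unit ball under radial
  projection w |-> w / |w|.\<close>
definition uniform_sphere :: "nat \<Rightarrow> (nat \<Rightarrow> real) measure" where
  "uniform_sphere d =
     distr (uniform_measure (lebesgue_Rd d) (unit_ball d)) (lebesgue_Rd d)
       (\<lambda>w. restrict (\<lambda>i. w i / euclid_norm d w) {..<d})"

definition hypercube :: "nat \<Rightarrow> (nat \<Rightarrow> real) set" where
  "hypercube d = PiE {..<d} (\<lambda>_. {-1, 1})"

definition samples_measure :: "nat \<Rightarrow> nat \<Rightarrow> (nat \<Rightarrow> nat \<Rightarrow> real) measure" where
  "samples_measure d N = PiM {..<N} (\<lambda>_. uniform_count_measure (hypercube d))"

definition joint_measure :: "nat \<Rightarrow> nat \<Rightarrow> ((nat \<Rightarrow> real) \<times> (nat \<Rightarrow> nat \<Rightarrow> real)) measure" where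
  "joint_measure d N = uniform_sphere d \<Otimes>\<^sub>M samples_measure d N"

text \<open>Label y = x_1 x_2 (indices 0 and 1 here).\<close>
definition label :: "(nat \<Rightarrow> real) \<Rightarrow> real" where
  "label x = x 0 * x 1"

definition q0 :: "nat \<Rightarrow> nat \<Rightarrow> (nat \<Rightarrow> real) \<Rightarrow> (nat \<Rightarrow> nat \<Rightarrow> real) \<Rightarrow> real" where
  "q0 d N w xs = (1 / real N) * (\<Sum>s<N. label (xs s) * (\<Sum>i<d. xs s i * w i)^2)"

definition p_PZ :: "real \<Rightarrow> real" where
  "p_PZ c = (1 - 1 / sqrt 2) * (1 - 4/3 * c^2)^2 / 3^8"

end

theory Submission
  imports Defs "HOL-Probability.Probability"
begin


lemma sum_PiE_insert:
  assumes "k \<notin> I"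
  shows "(\<Sum>xs\<in>PiE (insert k I) F. f xs) = (\<Sum>xs\<in>PiE I F. \<Sum>y\<in>F k. f (xs(k:=y)))"
proof -
  have "(\<Sum>xs\<in>PiE (insert k I) F. f xs) = (\<Sum>p\<in>F k \<times> PiE I F. f ((\<lambda>(y, g). g(k := y)) p))"
    unfolding PiE_insert_eq by (rule sum.reindex[OF inj_combinator[OF assms], unfolded comp_def])
  also have "\<dots> = (\<Sum>p\<in>F k \<times> PiE I F. f ((snd p)(k := fst p)))"
    by (rule sum.cong) (auto simp: split_beta)
  also have "\<dots> = (\<Sum>y\<in>F k. \<Sum>xs\<in>PiE I F. f (xs(k:=y)))"
    by (simp add: sum.cartesian_product')
  also have "\<dots> = (\<Sum>xs\<in>PiE I F. \<Sum>y\<in>F k. f (xs(k:=y)))"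
    by (rule sum.swap)
  finally show ?thesis .
qed

lemma sum_hypercube_Suc:
  "(\<Sum>x\<in>hypercube (Suc d). f x) = (\<Sum>x\<in>hypercube d. f (x(d:=1)) + f (x(d:=-1)))"
proof -
  have "hypercube (Suc d) = PiE (insert d {..<d}) (\<lambda>_. {-1,1::real})"
    unfolding hypercube_def by (simp add: lessThan_Suc)
  then show ?thesis unfolding hypercube_def
    by (simp add: sum_PiE_insert add.commute)
qed

lemma finite_hypercube: "finite (hypercube d)"
  unfolding hypercube_def by (simp add: finite_PiE)

lemma card_hypercube: "card (hypercube d) = 2 ^ d"
  unfolding hypercube_def by (simp add: card_PiE numeral_2_eq_2)

definition Sdot :: "nat \<Rightarrow> (nat \<Rightarrow> real) \<Rightarrow> (nat \<Rightarrow> real) \<Rightarrow> real" where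
  "Sdot d w x = (\<Sum>i<d. x i * w i)"

lemma Sdot_upd: "Sdot (Suc d) w (x(d:=b)) = Sdot d w x + b * w d"
  unfolding Sdot_def by simp

lemma rad_moments:
  fixes w :: "nat \<Rightarrow> real"
  defines "r \<equiv> \<lambda>d. (\<Sum>i<d. (w i)^2)"
  shows "(\<Sum>x\<in>hypercube d. (Sdot d w x)^2) = 2^d * r d \<and>
         (\<Sum>x\<in>hypercube d. (Sdot d w x)^4) \<le> 2^d * (3 * (r d)^2) \<and>
         (\<Sum>x\<in>hypercube d. (Sdot d w x)^6) \<le> 2^d * (15 * (r d)^3) \<and>
         (\<Sum>x\<in>hypercube d. (Sdot d w x)^8) \<le> 2^d * (105 * (r d)^4)"
proof (induction d)
  case 0
  then show ?case by (simp add: hypercube_def Sdot_def r_def)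
next
  case (Suc d)
  let ?M = "\<lambda>k. (\<Sum>x\<in>hypercube d. (Sdot d w x)^k)"
  let ?a = "w d"
  let ?r = "r d"
  have rS: "r (Suc d) = ?r + ?a^2" by (simp add: r_def)
  have r0: "?r \<ge> 0" unfolding r_def by (simp add: sum_nonneg)
  have e: "\<And>k. (\<Sum>x\<in>hypercube (Suc d). (Sdot (Suc d) w x)^k) =
       (\<Sum>x\<in>hypercube d. (Sdot d w x + ?a)^k + (Sdot d w x - ?a)^k)"
    by (simp add: sum_hypercube_Suc Sdot_upd)
  have p2: "\<And>s::real. (s + ?a)^2 + (s - ?a)^2 = 2 * s^2 + 2 * ?a^2" by algebra
  have p4: "\<And>s::real. (s + ?a)^4 + (s - ?a)^4 = 2 * s^4 + 12 * ?a^2 * s^2 + 2 * ?a^4" by algebra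
  have p6: "\<And>s::real. (s + ?a)^6 + (s - ?a)^6 = 2 * s^6 + 30 * ?a^2 * s^4 + 30 * ?a^4 * s^2 + 2 * ?a^6" by algebra
  have p8: "\<And>s::real. (s + ?a)^8 + (s - ?a)^8 = 2 * s^8 + 56 * ?a^2 * s^6 + 140 * ?a^4 * s^4 + 56 * ?a^6 * s^2 + 2 * ?a^8" by algebra
  have M2: "?M 2 = 2^d * ?r" and M4: "?M 4 \<le> 2^d * (3 * ?r^2)" and M6: "?M 6 \<le> 2^d * (15 * ?r^3)"
    and M8: "?M 8 \<le> 2^d * (105 * ?r^4)" using Suc.IH by auto
  have E2: "(\<Sum>x\<in>hypercube (Suc d). (Sdot (Suc d) w x)^2) = 2 * ?M 2 + 2^(Suc d) * ?a^2"
    by (simp add: e p2 sum.distrib sum_distrib_left card_hypercube)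
  have E4: "(\<Sum>x\<in>hypercube (Suc d). (Sdot (Suc d) w x)^4) = 2 * ?M 4 + 12 * ?a^2 * ?M 2 + 2^(Suc d) * ?a^4"
    by (simp add: e p4 sum.distrib sum_distrib_left card_hypercube)
  have E6: "(\<Sum>x\<in>hypercube (Suc d). (Sdot (Suc d) w x)^6) = 2 * ?M 6 + 30 * ?a^2 * ?M 4 + 30 * ?a^4 * ?M 2 + 2^(Suc d) * ?a^6"
    by (simp add: e p6 sum.distrib sum_distrib_left card_hypercube)
  have E8: "(\<Sum>x\<in>hypercube (Suc d). (Sdot (Suc d) w x)^8) = 2 * ?M 8 + 56 * ?a^2 * ?M 6 + 140 * ?a^4 * ?M 4 + 56 * ?a^6 * ?M 2 + 2^(Suc d) * ?a^8"
    by (simp add: e p8 sum.distrib sum_distrib_left card_hypercube)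
  define t where "t = ?a^2"
  have t0: "t \<ge> 0" unfolding t_def by simp
  have a4: "?a^4 = t^2" "?a^6 = t^3" "?a^8 = t^4" unfolding t_def by (simp_all add: power_mult[symmetric])
  define P where "P = (2::real)^d"
  have P0: "P > 0" unfolding P_def by simp
  have "12 * t * ?M 2 = 12 * t * (P * ?r)" using M2 P_def by simp
  have m4: "12 * t * ?M 4 \<le> 12 * t * (P * (3 * ?r^2))" using M4 t0 P_def by (intro mult_left_mono) auto
  have i4: "2 * ?M 4 + 12 * t * ?M 2 + 2 * P * t^2 \<le> 2 * P * (3 * (?r + t)^2)"
  proof -
    have "2 * ?M 4 + 12 * t * ?M 2 + 2 * P * t^2 \<le> 2 * (P * (3 * ?r^2)) + 12 * t * (P * ?r) + 2 * P * t^2"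
      using M4 M2 P_def by auto
    also have "\<dots> \<le> 2 * P * (3 * (?r + t)^2)"
      using P0 t0 r0 by (simp add: power2_eq_square algebra_simps)
    finally show ?thesis .
  qed
  have i6: "2 * ?M 6 + 30 * t * ?M 4 + 30 * t^2 * ?M 2 + 2 * P * t^3 \<le> 2 * P * (15 * (?r + t)^3)"
  proof -
    have "30 * t * ?M 4 \<le> 30 * t * (P * (3 * ?r^2))" using M4 t0 P_def by (intro mult_left_mono) auto
    then have "2 * ?M 6 + 30 * t * ?M 4 + 30 * t^2 * ?M 2 + 2 * P * t^3 \<le> 2 * (P * (15 * ?r^3)) + 30 * t * (P * (3 * ?r^2)) + 30 * t^2 * (P * ?r) + 2 * P * t^3"
      using M6 M2 P_def by auto
    also have "\<dots> \<le> 2 * P * (15 * (?r + t)^3)"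
    proof -
      have "0 \<le> P * (t * ?r^2 * 0 + t^2 * ?r * 60 + t^3 * 28)" using P0 t0 r0 by simp
      then show ?thesis by (simp add: power2_eq_square power3_eq_cube algebra_simps)
    qed
    finally show ?thesis .
  qed
  have i8: "2 * ?M 8 + 56 * t * ?M 6 + 140 * t^2 * ?M 4 + 56 * t^3 * ?M 2 + 2 * P * t^4 \<le> 2 * P * (105 * (?r + t)^4)"
  proof -
    have "56 * t * ?M 6 \<le> 56 * t * (P * (15 * ?r^3))" using M6 t0 P_def by (intro mult_left_mono) auto
    moreover have "140 * t^2 * ?M 4 \<le> 140 * t^2 * (P * (3 * ?r^2))" using M4 t0 P_def by (intro mult_left_mono) auto
    ultimately have "2 * ?M 8 + 56 * t * ?M 6 + 140 * t^2 * ?M 4 + 56 * t^3 * ?M 2 + 2 * P * t^4 \<le>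
       2 * (P * (105 * ?r^4)) + 56 * t * (P * (15 * ?r^3)) + 140 * t^2 * (P * (3 * ?r^2)) + 56 * t^3 * (P * ?r) + 2 * P * t^4"
      using M8 M2 P_def by auto
    also have "\<dots> \<le> 2 * P * (105 * (?r + t)^4)"
    proof -
      have "0 \<le> P * (t^2 * ?r^2 * 840 + t^3 * ?r * 784 + t^4 * 208)" using P0 t0 r0 by simp
      then show ?thesis by (simp add: power2_eq_square power3_eq_cube power4_eq_xxxx algebra_simps)
    qed
    finally show ?thesis .
  qed
  show ?case
    unfolding rS E2 E4 E6 E8 a4 t_def[symmetric]
    using M2 i4 i6 i8 by (simp add: P_def algebra_simps)
qed



definition Yf :: "nat \<Rightarrow> (nat \<Rightarrow> real) \<Rightarrow> (nat \<Rightarrow> real) \<Rightarrow> real" where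
  "Yf d w x = label x * (Sdot d w x)^2"

lemma hypercube_coord: "x \<in> hypercube d \<Longrightarrow> i < d \<Longrightarrow> x i = -1 \<or> x i = 1"
  unfolding hypercube_def by (auto simp: PiE_def Pi_def)

lemma label_sq: "d \<ge> 2 \<Longrightarrow> x \<in> hypercube d \<Longrightarrow> (label x)^2 = 1"
  using hypercube_coord[of x d 0] hypercube_coord[of x d 1]
  unfolding label_def by (auto simp: power2_eq_square)

lemma pow4_diff_le: "((a::real) - b)^4 \<le> 8 * (a^4 + b^4)"
proof -
  have "(a - b)^2 \<le> 2*a^2 + 2*b^2" using sum_power2_ge_zero[of "a+b" 0]
    by (simp add: power2_eq_square algebra_simps)
  then have "((a - b)^2)^2 \<le> (2*a^2 + 2*b^2)^2" by (intro power_mono) auto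
  also have "\<dots> \<le> 8 * (a^4 + b^4)"
    using zero_le_power2[of "a^2 - b^2"] by (simp add: power2_eq_square power4_eq_xxxx algebra_simps)
  finally show ?thesis by (simp add: power_mult[symmetric])
qed

locale onesample =
  fixes d :: nat and w :: "nat \<Rightarrow> real"
  assumes d2: "d \<ge> 2" and unit: "(\<Sum>i<d. (w i)^2) = 1"
begin

abbreviation "H \<equiv> hypercube d"
abbreviation "h \<equiv> (2::real)^d"
abbreviation "S \<equiv> Sdot d w"
abbreviation "Y \<equiv> Yf d w"
definition "mu = (\<Sum>x\<in>H. Y x) / h"

lemma S2: "(\<Sum>x\<in>H. (S x)^2) = h" using rad_moments[where w=w and d=d] unit by simp
lemma S8: "(\<Sum>x\<in>H. (S x)^8) \<le> 105 * h" using rad_moments[where w=w and d=d] unit by simp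

lemma absY: "x \<in> H \<Longrightarrow> \<bar>Y x\<bar> = (S x)^2"
proof -
  assume x: "x \<in> H"
  have "\<bar>label x\<bar> = 1" using label_sq[OF d2 x]
    by (metis abs_power2 power2_eq_1_iff abs_1 abs_neg_one)
  then show ?thesis unfolding Yf_def by (simp add: abs_mult)
qed

lemma mu_bound: "\<bar>mu\<bar> \<le> 1"
proof -
  have "\<bar>\<Sum>x\<in>H. Y x\<bar> \<le> (\<Sum>x\<in>H. \<bar>Y x\<bar>)" by (rule sum_abs)
  also have "\<dots> = h" using absY S2 by simp
  finally show ?thesis unfolding mu_def by (simp add: abs_divide)
qed

lemma Y4: "x \<in> H \<Longrightarrow> (Y x)^4 = (S x)^8"
proof -
  assume x: "x \<in> H"
  have "(Y x)^4 = (\<bar>Y x\<bar>)^4" by (simp add: power_even_abs_numeral)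
  then show ?thesis using absY[OF x] by (simp add: power_mult[symmetric])
qed

lemma centered4: "(\<Sum>x\<in>H. (Y x - mu)^4) \<le> 848 * h"
proof -
  have "(\<Sum>x\<in>H. (Y x - mu)^4) \<le> (\<Sum>x\<in>H. 8 * ((S x)^8 + 1))"
  proof (rule sum_mono)
    fix x assume x: "x \<in> H"
    have "\<bar>mu\<bar>^4 \<le> 1" by (rule power_le_one) (use mu_bound in auto)
    then have "mu^4 \<le> 1" by (simp add: power_even_abs_numeral)
    then show "(Y x - mu)^4 \<le> 8 * ((S x)^8 + 1)" using pow4_diff_le[of "Y x" mu] Y4[OF x] by simp
  qed
  also have "\<dots> = 8 * (\<Sum>x\<in>H. (S x)^8) + 8 * h"
    by (simp add: sum.distrib sum_distrib_left card_hypercube)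
  also have "\<dots> \<le> 848 * h" using S8 by simp
  finally show ?thesis .
qed

definition flip :: "(nat \<Rightarrow> real) \<Rightarrow> (nat \<Rightarrow> real)" where "flip x = x(0 := - x 0)"

lemma flip_in: "x \<in> H \<Longrightarrow> flip x \<in> H"
proof -
  assume x: "x \<in> H"
  have "x 0 = -1 \<or> x 0 = 1" using hypercube_coord[OF x, of 0] d2 by simp
  then show ?thesis using x d2 unfolding flip_def hypercube_def
    by (elim disjE) (auto simp: PiE_def Pi_def extensional_def)
qed

lemma flip_flip: "flip (flip x) = x"
  unfolding flip_def by auto

lemma sum_flip: "(\<Sum>x\<in>H. f (flip x)) = (\<Sum>x\<in>H. f x)"
  by (rule sum.reindex_bij_witness[where i=flip and j=flip]) (auto simp: flip_flip flip_in)

lemma Y_flip: "Y (flip x) = - label x * (S (flip x))^2"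
  unfolding Yf_def label_def flip_def by simp

lemma centered2: "(\<Sum>x\<in>H. (Y x - mu)^2) \<ge> h"
proof -
  have pt: "(Y x - mu)^2 + (Y (flip x) - mu)^2 \<ge> 2 * ((S x)^2 + (S (flip x))^2) - 2" if x: "x \<in> H" for x
  proof -
    have l: "(label x)^2 = 1" using label_sq[OF d2 x] .
    define a where "a = (S x)^2" define b where "b = (S (flip x))^2"
    have "Y x - Y (flip x) = label x * (a + b)" unfolding a_def b_def Y_flip by (simp add: Yf_def algebra_simps)
    then have "(Y x - Y (flip x))^2 = (a + b)^2" using l by (simp add: power_mult_distrib)
    moreover have "(Y x - mu)^2 + (Y (flip x) - mu)^2 \<ge> (Y x - Y (flip x))^2 / 2"
    proof -
      have "(Y x - mu)^2 + (Y (flip x) - mu)^2 - (Y x - Y (flip x))^2 / 2 = (Y x + Y (flip x) - 2 * mu)^2 / 2"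
        by (simp add: power2_eq_square field_simps)
      then show ?thesis using zero_le_power2[of "Y x + Y (flip x) - 2 * mu"] by linarith
    qed
    moreover have "(a + b)^2 / 2 \<ge> 2 * (a + b) - 2"
      using zero_le_power2[of "a + b - 2"] by (simp add: power2_eq_square algebra_simps)
    ultimately show ?thesis unfolding a_def b_def by linarith
  qed
  have "(\<Sum>x\<in>H. (Y x - mu)^2 + (Y (flip x) - mu)^2) \<ge> (\<Sum>x\<in>H. 2 * ((S x)^2 + (S (flip x))^2) - 2)"
    by (rule sum_mono) (use pt in auto)
  moreover have "(\<Sum>x\<in>H. (Y x - mu)^2 + (Y (flip x) - mu)^2) = 2 * (\<Sum>x\<in>H. (Y x - mu)^2)"
    by (simp add: sum.distrib sum_flip[of "\<lambda>x. (Y x - mu)^2"])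
  moreover have "(\<Sum>x\<in>H. 2 * ((S x)^2 + (S (flip x))^2) - 2) = 2 * h"
    by (simp add: sum_subtractf sum.distrib sum_distrib_left[symmetric] sum_flip[of "\<lambda>x. (S x)^2"] S2 card_hypercube)
  ultimately show ?thesis by linarith
qed

lemma centered1: "(\<Sum>x\<in>H. Y x - mu) = 0"
  by (simp add: sum_subtractf mu_def card_hypercube)

end


lemma pow4_expand: "((t::real) + g)^4 = t^4 + 4 * t^3 * g + 6 * t^2 * g^2 + 4 * t * g^3 + g^4"
  by algebra

context onesample begin

definition "gc x = Y x - mu"
definition "Om n = PiE {..<n} (\<lambda>_. H)"
definition "T n xs = (\<Sum>s<n. gc (xs s))"
definition "A2 = (\<Sum>x\<in>H. (gc x)^2)"
definition "A3 = (\<Sum>x\<in>H. (gc x)^3)"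
definition "A4 = (\<Sum>x\<in>H. (gc x)^4)"

lemma A1: "(\<Sum>x\<in>H. gc x) = 0" unfolding gc_def using centered1 .

lemma T_upd: "T (Suc n) (xs(n:=y)) = T n xs + gc y"
  unfolding T_def by simp

lemma sum_Om_Suc: "(\<Sum>xs\<in>Om (Suc n). f xs) = (\<Sum>xs\<in>Om n. \<Sum>y\<in>H. f (xs(n:=y)))"
  unfolding Om_def lessThan_Suc by (rule sum_PiE_insert) simp

lemma card_Om: "real (card (Om n)) = h ^ n"
  unfolding Om_def by (simp add: card_PiE card_hypercube power_mult[symmetric] mult.commute)

lemma T_moments:
  "(\<Sum>xs\<in>Om n. T n xs) = 0 \<and>
   (\<Sum>xs\<in>Om n. (T n xs)^2) = h^n * (real n * (A2 / h)) \<and>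
   (\<Sum>xs\<in>Om n. (T n xs)^4) = h^n * (real n * (A4 / h) + 3 * real n * (real n - 1) * (A2 / h)^2)"
proof (induction n)
  case 0
  then show ?case by (simp add: Om_def T_def)
next
  case (Suc n)
  have h0: "h > 0" by simp
  have cH: "real (card H) = h" by (simp add: card_hypercube)
  have IH1: "(\<Sum>xs\<in>Om n. T n xs) = 0" and IH2: "(\<Sum>xs\<in>Om n. (T n xs)^2) = h^n * (real n * (A2 / h))"
    and IH4: "(\<Sum>xs\<in>Om n. (T n xs)^4) = h^n * (real n * (A4 / h) + 3 * real n * (real n - 1) * (A2 / h)^2)"
    using Suc.IH by auto
  have cH: "real (card H) = h" by (simp add: card_hypercube)
  have i1: "\<And>t. (\<Sum>y\<in>H. t + gc y) = h * t"
    by (simp add: sum.distrib A1 cH)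
  have i2: "\<And>t. (\<Sum>y\<in>H. (t + gc y)^2) = h * t^2 + A2"
  proof -
    fix t
    have "(\<Sum>y\<in>H. (t + gc y)^2) = (\<Sum>y\<in>H. t^2 + 2 * t * gc y + (gc y)^2)"
      by (simp add: power2_sum algebra_simps)
    also have "\<dots> = h * t^2 + 2 * t * (\<Sum>y\<in>H. gc y) + A2"
      by (simp add: sum.distrib sum_distrib_left cH A2_def)
    finally show "(\<Sum>y\<in>H. (t + gc y)^2) = h * t^2 + A2" by (simp add: A1)
  qed
  have i4: "\<And>t. (\<Sum>y\<in>H. (t + gc y)^4) = h * t^4 + 6 * A2 * t^2 + 4 * A3 * t + A4"
  proof -
    fix t
    have "(\<Sum>y\<in>H. (t + gc y)^4) = (\<Sum>y\<in>H. t^4 + 4 * t^3 * gc y + 6 * t^2 * (gc y)^2 + 4 * t * (gc y)^3 + (gc y)^4)"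
      by (simp add: pow4_expand)
    also have "\<dots> = h * t^4 + 4 * t^3 * (\<Sum>y\<in>H. gc y) + 6 * t^2 * A2 + 4 * t * A3 + A4"
      by (simp add: sum.distrib sum_distrib_left cH A2_def A3_def A4_def)
    finally show "(\<Sum>y\<in>H. (t + gc y)^4) = h * t^4 + 6 * A2 * t^2 + 4 * A3 * t + A4" by (simp add: A1)
  qed
  have s1: "(\<Sum>xs\<in>Om (Suc n). T (Suc n) xs) = h * (\<Sum>xs\<in>Om n. T n xs)"
    by (simp add: sum_Om_Suc T_upd i1 sum_distrib_left)
  have s2: "(\<Sum>xs\<in>Om (Suc n). (T (Suc n) xs)^2) = h * (\<Sum>xs\<in>Om n. (T n xs)^2) + h^n * A2"
    by (simp add: sum_Om_Suc T_upd i2 sum.distrib sum_distrib_left card_Om)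
  have s4: "(\<Sum>xs\<in>Om (Suc n). (T (Suc n) xs)^4) = h * (\<Sum>xs\<in>Om n. (T n xs)^4) + 6 * A2 * (\<Sum>xs\<in>Om n. (T n xs)^2) + 4 * A3 * (\<Sum>xs\<in>Om n. T n xs) + h^n * A4"
    by (simp add: sum_Om_Suc T_upd i4 sum.distrib sum_distrib_left card_Om)
  show ?case
  proof (intro conjI)
    show "(\<Sum>xs\<in>Om (Suc n). T (Suc n) xs) = 0" using s1 IH1 by simp
    show "(\<Sum>xs\<in>Om (Suc n). (T (Suc n) xs)^2) = h^Suc n * (real (Suc n) * (A2 / h))"
      using s2 IH2 h0 by (simp add: field_simps)
    show "(\<Sum>xs\<in>Om (Suc n). (T (Suc n) xs)^4) = h^Suc n * (real (Suc n) * (A4 / h) + 3 * real (Suc n) * (real (Suc n) - 1) * (A2 / h)^2)"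
      unfolding s4 IH1 IH2 IH4 using h0 by (simp add: field_simps power2_eq_square)
  qed
qed

end


context onesample begin

lemma q0_eq: "N \<ge> 1 \<Longrightarrow> q0 d N w xs = mu + T N xs / real N"
proof -
  assume N: "N \<ge> 1"
  have "q0 d N w xs = (1 / real N) * (\<Sum>s<N. Y (xs s))"
    unfolding q0_def Yf_def Sdot_def by simp
  also have "(\<Sum>s<N. Y (xs s)) = (\<Sum>s<N. gc (xs s) + mu)" unfolding gc_def by simp
  also have "\<dots> = T N xs + real N * mu" unfolding T_def by (simp add: sum.distrib)
  finally show ?thesis using N by (simp add: field_simps)
qed

lemma e2_ge: "A2 / h \<ge> 1" using centered2 unfolding A2_def gc_def by simp
lemma e4_le: "A4 / h \<le> 848" using centered4 unfolding A4_def gc_def by (simp add: field_simps)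

lemma finite_PZ:
  assumes N: "N \<ge> 1" and c0: "0 < c0" "c0 < 1"
  shows "real (card {xs \<in> Om N. c0 / sqrt (real N) \<le> \<bar>q0 d N w xs\<bar>}) / h^N \<ge> (1 - c0^2)^2 / 6808"
proof -
  define n where "n = real N"
  have n1: "n \<ge> 1" using N n_def by simp
  have n0: "n \<noteq> 0" using n1 by simp
  define e2 where "e2 = A2 / h"
  define e4 where "e4 = A4 / h"
  have e2: "e2 \<ge> 1" using e2_ge e2_def by simp
  have e4: "e4 \<le> 848" using e4_le e4_def by simp
  define W where "W = h^N"
  have W0: "W > 0" unfolding W_def by simp
  define Q where "Q xs = mu + T N xs / n" for xs
  have Qq: "q0 d N w xs = Q xs" for xs using q0_eq[OF N] unfolding Q_def n_def by simp
  have fin: "finite (Om N)" unfolding Om_def by (simp add: finite_PiE finite_hypercube)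
  have TM: "(\<Sum>xs\<in>Om N. T N xs) = 0" "(\<Sum>xs\<in>Om N. (T N xs)^2) = W * (n * e2)"
      "(\<Sum>xs\<in>Om N. (T N xs)^4) = W * (n * e4 + 3 * n * (n - 1) * e2^2)"
    using T_moments[of N] unfolding W_def n_def e2_def e4_def by auto
  define m2 where "m2 = mu^2 + e2 / n"
  have m2pos: "m2 > 0" unfolding m2_def using e2 n1 by (simp add: add_nonneg_pos)
  have SQ2: "(\<Sum>xs\<in>Om N. (Q xs)^2) = W * m2"
  proof -
    have "(\<Sum>xs\<in>Om N. (Q xs)^2) = (\<Sum>xs\<in>Om N. mu^2 + (2 * mu / n) * T N xs + (1 / n^2) * (T N xs)^2)"
      unfolding Q_def using n0 by (intro sum.cong) (auto simp: power2_eq_square field_simps)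
    also have "\<dots> = real (card (Om N)) * mu^2 + (2 * mu / n) * (\<Sum>xs\<in>Om N. T N xs) + (1 / n^2) * (\<Sum>xs\<in>Om N. (T N xs)^2)"
      by (simp add: sum.distrib sum_distrib_left)
    also have "\<dots> = W * m2" unfolding TM card_Om W_def[symmetric] m2_def using n1
      by (simp add: field_simps power2_eq_square)
    finally show ?thesis .
  qed
  have SQ4: "(\<Sum>xs\<in>Om N. (Q xs)^4) \<le> W * (6808 * m2^2)"
  proof -
    have "(\<Sum>xs\<in>Om N. (Q xs)^4) \<le> (\<Sum>xs\<in>Om N. 8 * mu^4 + (8 / n^4) * (T N xs)^4)"
    proof (rule sum_mono)
      fix xs
      have "(Q xs)^4 \<le> 8 * (mu^4 + (- (T N xs / n))^4)"
        unfolding Q_def using pow4_diff_le[of mu "- (T N xs / n)"] by simp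
      then show "(Q xs)^4 \<le> 8 * mu^4 + (8 / n^4) * (T N xs)^4"
        by (simp add: power_divide field_simps)
    qed
    also have "\<dots> = W * (8 * mu^4) + (8 / n^4) * (W * (n * e4 + 3 * n * (n - 1) * e2^2))"
      unfolding TM(3)[symmetric] by (simp add: sum.distrib sum_distrib_left card_Om W_def)
    also have "\<dots> \<le> W * (6808 * m2^2)"
    proof -
      have e40: "e4 \<ge> 0" unfolding e4_def A4_def by (simp add: sum_nonneg)
      have b1: "n * e4 \<le> 848 * (n^2 * e2^2)"
      proof -
        have "n * e4 \<le> n * 848" using e4 n1 by simp
        also have "\<dots> \<le> 848 * (n^2 * e2^2)"
        proof -
          have "n \<le> n^2" using n1 by (simp add: power2_eq_square)
          moreover have "1 \<le> e2^2" using e2 by (simp add: one_le_power)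
          ultimately have "n * 1 \<le> n^2 * e2^2" using n1 by (intro mult_mono) auto
          then show ?thesis by simp
        qed
        finally show ?thesis .
      qed
      have b2: "3 * n * (n - 1) * e2^2 \<le> 3 * (n^2 * e2^2)"
      proof -
        have "3 * n * (n - 1) \<le> 3 * n^2" using n1 by (simp add: power2_eq_square algebra_simps)
        then have "3 * n * (n - 1) * e2^2 \<le> 3 * n^2 * e2^2" by (intro mult_right_mono) auto
        then show ?thesis by simp
      qed
      have b: "(8 / n^4) * (n * e4 + 3 * n * (n - 1) * e2^2) \<le> 8 * 851 * (e2 / n)^2"
      proof -
        have "(8 / n^4) * (n * e4 + 3 * n * (n - 1) * e2^2) \<le> (8 / n^4) * (851 * (n^2 * e2^2))"
          using b1 b2 n1 by (intro mult_left_mono) auto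
        also have "\<dots> = 8 * 851 * (e2 / n)^2" using n1 by (simp add: field_simps power2_eq_square power4_eq_xxxx)
        finally show ?thesis .
      qed
      define u where "u = e2 / n"
      have u0: "u \<ge> 0" unfolding u_def using e2 n1 by simp
      have "8 * mu^4 + 8 * 851 * u^2 \<le> 6808 * (mu^2 + u)^2"
      proof -
        have "0 \<le> 6800 * mu^4 + 6808 * 2 * mu^2 * u" using u0 by simp
        then show ?thesis by (simp add: power2_eq_square power4_eq_xxxx algebra_simps)
      qed
      then have "8 * mu^4 + (8 / n^4) * (n * e4 + 3 * n * (n - 1) * e2^2) \<le> 6808 * m2^2"
        using b unfolding m2_def u_def by linarith
      then have "W * (8 * mu^4 + (8 / n^4) * (n * e4 + 3 * n * (n - 1) * e2^2)) \<le> W * (6808 * m2^2)"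
        using W0 by (intro mult_left_mono) auto
      then show ?thesis by (simp add: algebra_simps)
    qed
    finally show ?thesis .
  qed
  define a where "a = c0^2 / n"
  define A where "A = {xs \<in> Om N. a \<le> (Q xs)^2}"
  have Aeq: "{xs \<in> Om N. c0 / sqrt (real N) \<le> \<bar>q0 d N w xs\<bar>} = A"
  proof -
    have "c0 / sqrt n \<le> \<bar>Q xs\<bar> \<longleftrightarrow> a \<le> (Q xs)^2" for xs
    proof -
      have "c0 / sqrt n \<ge> 0" using c0 n1 by simp
      then have "c0 / sqrt n \<le> \<bar>Q xs\<bar> \<longleftrightarrow> \<bar>c0 / sqrt n\<bar> \<le> \<bar>Q xs\<bar>"
        by (simp only: abs_of_nonneg)
      also have "\<dots> \<longleftrightarrow> (c0 / sqrt n)^2 \<le> (Q xs)^2" by (rule abs_le_square_iff)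
      also have "(c0 / sqrt n)^2 = a" unfolding a_def using n1 by (simp add: power_divide)
      finally show ?thesis by simp
    qed
    then show ?thesis unfolding A_def Qq n_def by simp
  qed
  have finA: "finite A" "A \<subseteq> Om N" unfolding A_def using fin by auto
  have am: "a \<le> c0^2 * m2"
  proof -
    have "c0^2 * 1 \<le> c0^2 * e2" using e2 by (intro mult_left_mono) auto
    then have "a \<le> c0^2 * (e2 / n)" unfolding a_def using e2 n1 by (simp add: divide_right_mono field_simps)
    also have "\<dots> \<le> c0^2 * m2" unfolding m2_def by (intro mult_left_mono) auto
    finally show ?thesis .
  qed
  have split: "(\<Sum>xs\<in>Om N. (Q xs)^2) = (\<Sum>xs\<in>A. (Q xs)^2) + (\<Sum>xs\<in>Om N - A. (Q xs)^2)"
    using sum.subset_diff[OF finA(2) fin, of "\<lambda>xs. (Q xs)^2"] by simp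
  have out: "(\<Sum>xs\<in>Om N - A. (Q xs)^2) \<le> W * a"
  proof -
    have "(\<Sum>xs\<in>Om N - A. (Q xs)^2) \<le> (\<Sum>xs\<in>Om N - A. a)"
      by (rule sum_mono) (auto simp: A_def)
    also have "\<dots> = real (card (Om N - A)) * a" by simp
    also have "\<dots> \<le> real (card (Om N)) * a"
      using a_def c0 n1 fin by (intro mult_right_mono) (auto intro: card_mono)
    finally show ?thesis unfolding card_Om W_def .
  qed
  have inA: "(\<Sum>xs\<in>A. (Q xs)^2) \<ge> W * ((1 - c0^2) * m2)"
    using split out am SQ2 W0 by (simp add: algebra_simps) (smt (verit) W0 mult_left_mono)
  have inA0: "W * ((1 - c0^2) * m2) \<ge> 0" using W0 m2pos c0
    by (simp add: less_imp_le power_le_one mult_nonneg_nonneg)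
  have CS: "(\<Sum>xs\<in>A. (Q xs)^2)^2 \<le> (\<Sum>xs\<in>A. ((Q xs)^2)^2) * card A"
    by (rule sum_squared_le_sum_of_squares)
  have "(\<Sum>xs\<in>A. ((Q xs)^2)^2) \<le> (\<Sum>xs\<in>Om N. (Q xs)^4)"
    using finA fin by (auto simp: power_mult[symmetric] intro!: sum_mono2)
  also have "\<dots> \<le> W * (6808 * m2^2)" by (rule SQ4)
  finally have S4A: "(\<Sum>xs\<in>A. ((Q xs)^2)^2) \<le> W * (6808 * m2^2)" .
  have "(W * ((1 - c0^2) * m2))^2 \<le> (\<Sum>xs\<in>A. (Q xs)^2)^2"
    using inA inA0 by (intro power_mono) auto
  also have "\<dots> \<le> W * (6808 * m2^2) * card A"
    using CS S4A by (smt (verit) mult_right_mono of_nat_0_le_iff)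
  finally have key0: "(W * ((1 - c0^2) * m2))^2 \<le> W * (6808 * m2^2) * card A" .
  have eq1: "(W * ((1 - c0^2) * m2))^2 = W^2 * m2^2 * (1 - c0^2)^2" by (simp add: power_mult_distrib)
  have eq2: "W * (6808 * m2^2) * card A = W * m2^2 * (6808 * card A)" by simp
  have key: "W^2 * m2^2 * (1 - c0^2)^2 \<le> W * m2^2 * (6808 * card A)"
    using key0 unfolding eq1 eq2 .
  have "W * m2^2 * ((1 - c0^2)^2 * W) \<le> W * m2^2 * (6808 * card A)"
    using key by (simp add: power2_eq_square algebra_simps)
  then have "(1 - c0^2)^2 * W \<le> 6808 * card A"
    using W0 m2pos by (subst (asm) mult_le_cancel_left_pos) auto
  then have "(1 - c0^2)^2 / 6808 \<le> card A / W"
    using W0 by (simp add: field_simps)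
  then show ?thesis unfolding Aeq W_def .
qed

end


lemma prob_ucm: "prob_space (uniform_count_measure (hypercube d))"
  by (rule prob_space_uniform_count_measure) (simp add: finite_hypercube, simp add: hypercube_def PiE_eq_empty_iff)

lemma psf_samples: "product_sigma_finite (\<lambda>_. uniform_count_measure (hypercube d))"
  unfolding product_sigma_finite_def
  using prob_ucm prob_space_imp_sigma_finite by blast

lemma prob_samples: "prob_space (samples_measure d N)"
  unfolding samples_measure_def
  by (rule prob_space_PiM) (rule prob_ucm)

lemma space_samples: "space (samples_measure d N) = PiE {..<N} (\<lambda>_. hypercube d)"
  unfolding samples_measure_def by (simp add: space_PiM space_uniform_count_measure)

lemma singleton_PiE: "xs \<in> PiE I F \<Longrightarrow> {xs} = PiE I (\<lambda>i. {xs i})"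
proof
  assume xs: "xs \<in> PiE I F"
  show "{xs} \<subseteq> PiE I (\<lambda>i. {xs i})" using xs by (auto simp: PiE_def extensional_def)
  show "PiE I (\<lambda>i. {xs i}) \<subseteq> {xs}"
  proof
    fix ys assume ys: "ys \<in> PiE I (\<lambda>i. {xs i})"
    have "ys i = xs i" for i
    proof (cases "i \<in> I")
      case True then show ?thesis using ys by (auto simp: PiE_iff)
    next
      case False then show ?thesis using ys xs by (simp add: PiE_def extensional_def)
    qed
    then show "ys \<in> {xs}" by auto
  qed
qed

lemma emeasure_samples:
  assumes B: "B \<subseteq> PiE {..<N} (\<lambda>_. hypercube d)"
  shows "emeasure (samples_measure d N) B = ennreal (real (card B) / real (card (PiE {..<N} (\<lambda>_. hypercube d))))"
proof -
  interpret product_sigma_finite "\<lambda>_. uniform_count_measure (hypercube d)" by (rule psf_samples)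
  let ?H = "hypercube d"
  have finP: "finite (PiE {..<N} (\<lambda>_. ?H))" by (simp add: finite_PiE finite_hypercube)
  have finB: "finite B" using B finP finite_subset by blast
  have cH: "card ?H > 0" using card_hypercube[of d] by simp
  have single: "emeasure (samples_measure d N) {xs} = ennreal ((1 / real (card ?H)) ^ N)"
    and sets: "{xs} \<in> sets (samples_measure d N)" if xs: "xs \<in> PiE {..<N} (\<lambda>_. ?H)" for xs
  proof -
    have xi: "\<And>i. i \<in> {..<N} \<Longrightarrow> {xs i} \<in> sets (uniform_count_measure ?H)"
      using xs by (auto simp: sets_uniform_count_measure PiE_def Pi_def)
    have "emeasure (samples_measure d N) {xs} = (\<Prod>i\<in>{..<N}. emeasure (uniform_count_measure ?H) {xs i})"
      unfolding samples_measure_def singleton_PiE[OF xs] by (rule emeasure_PiM) (auto intro: xi)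
    also have "\<dots> = (\<Prod>i\<in>{..<N}. ennreal (1 / real (card ?H)))"
    proof (rule prod.cong)
      fix i assume "i \<in> {..<N}"
      then have "xs i \<in> ?H" using xs by (auto simp: PiE_def Pi_def)
      then show "emeasure (uniform_count_measure ?H) {xs i} = ennreal (1 / real (card ?H))"
        by (subst emeasure_uniform_count_measure) (auto simp: finite_hypercube ennreal_of_nat_eq_real_of_nat divide_ennreal[symmetric])
    qed simp
    also have "\<dots> = ennreal ((1 / real (card ?H)) ^ N)" by (simp add: prod_ennreal ennreal_power)
    finally show "emeasure (samples_measure d N) {xs} = ennreal ((1 / real (card ?H)) ^ N)" .
    show "{xs} \<in> sets (samples_measure d N)"
      unfolding samples_measure_def singleton_PiE[OF xs] by (rule sets_PiM_I_finite) (auto intro: xi)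
  qed
  have "emeasure (samples_measure d N) B = (\<Sum>xs\<in>B. emeasure (samples_measure d N) {xs})"
    using finB sets B by (intro emeasure_eq_sum_singleton) auto
  also have "\<dots> = (\<Sum>xs\<in>B. ennreal ((1 / real (card ?H)) ^ N))"
    using single B by (intro sum.cong) auto
  also have "\<dots> = ennreal (real (card B) * (1 / real (card ?H)) ^ N)"
    by (simp add: ennreal_of_nat_eq_real_of_nat ennreal_mult)
  also have "real (card B) * (1 / real (card ?H)) ^ N = real (card B) / real (card (PiE {..<N} (\<lambda>_. ?H)))"
    by (simp add: card_PiE power_one_over divide_inverse power_inverse)
  finally show ?thesis .
qed



lemma space_LRd: "space (lebesgue_Rd d) = PiE {..<d} (\<lambda>_. UNIV)"
  unfolding lebesgue_Rd_def by (simp add: space_PiM)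

lemma psf_lborel: "product_sigma_finite (\<lambda>_::nat. (lborel :: real measure))"
  unfolding product_sigma_finite_def using sigma_finite_lborel by blast

lemma euclid_meas[measurable]: "euclid_norm d \<in> borel_measurable (lebesgue_Rd d)"
  unfolding euclid_norm_def lebesgue_Rd_def by measurable

lemma ball_sets[measurable]: "unit_ball d \<in> sets (lebesgue_Rd d)"
  unfolding unit_ball_def by measurable

lemma emeasure_box: "emeasure (lebesgue_Rd d) (PiE {..<d} (\<lambda>_. {a..b::real})) = (\<Prod>i\<in>{..<d}. emeasure lborel {a..b})"
proof -
  interpret product_sigma_finite "\<lambda>_::nat. (lborel :: real measure)" by (rule psf_lborel)
  show ?thesis unfolding lebesgue_Rd_def by (rule emeasure_PiM) auto
qed

lemma ball_fin: "emeasure (lebesgue_Rd d) (unit_ball d) \<noteq> \<infinity>"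
proof -
  have "unit_ball d \<subseteq> PiE {..<d} (\<lambda>_. {-1..1::real})"
  proof
    fix w assume w: "w \<in> unit_ball d"
    then have s: "sqrt (\<Sum>i<d. (w i)^2) \<le> 1" and ws: "w \<in> PiE {..<d} (\<lambda>_. UNIV)"
      unfolding unit_ball_def euclid_norm_def space_LRd by auto
    have "(\<Sum>i<d. (w i)^2) \<le> 1" using s by (metis real_sqrt_le_1_iff)
    then have "(w i)^2 \<le> 1" if "i < d" for i
      using member_le_sum[of i "{..<d}" "\<lambda>i. (w i)^2"] that by simp
    then have "\<bar>w i\<bar> \<le> 1" if "i < d" for i using that by (simp add: abs_square_le_1)
    then show "w \<in> PiE {..<d} (\<lambda>_. {-1..1::real})" using ws by (auto simp: PiE_def Pi_def abs_le_iff)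
  qed
  then have "emeasure (lebesgue_Rd d) (unit_ball d) \<le> emeasure (lebesgue_Rd d) (PiE {..<d} (\<lambda>_. {-1..1::real}))"
    by (intro emeasure_mono) (auto simp: lebesgue_Rd_def intro!: sets_PiM_I_finite)
  also have "\<dots> = (\<Prod>i\<in>{..<d}. ennreal 2)" unfolding emeasure_box by simp
  finally show ?thesis using ennreal_prod_eq_top[of "\<lambda>_. ennreal 2" "{..<d}"] by (auto simp: top_unique)
qed

lemma ball_pos: "d \<ge> 1 \<Longrightarrow> emeasure (lebesgue_Rd d) (unit_ball d) \<noteq> 0"
proof -
  assume d: "d \<ge> 1"
  let ?e = "1 / real d"
  have "PiE {..<d} (\<lambda>_. {-?e..?e}) \<subseteq> unit_ball d"
  proof
    fix w assume w: "w \<in> PiE {..<d} (\<lambda>_. {-?e..?e})"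
    have "(w i)^2 \<le> ?e^2" if "i < d" for i
    proof -
      have "\<bar>w i\<bar> \<le> ?e" using w that by (auto simp: PiE_def Pi_def abs_le_iff)
      then show ?thesis by (metis abs_le_square_iff abs_of_nonneg divide_nonneg_nonneg of_nat_0_le_iff zero_le_one)
    qed
    then have "(\<Sum>i<d. (w i)^2) \<le> (\<Sum>i<d. ?e^2)" by (intro sum_mono) auto
    also have "\<dots> = 1 / real d" using d by (simp add: power2_eq_square)
    also have "\<dots> \<le> 1" using d by simp
    finally have "euclid_norm d w \<le> 1" unfolding euclid_norm_def by simp
    then show "w \<in> unit_ball d" using w unfolding unit_ball_def space_LRd by (auto simp: PiE_def)
  qed
  then have "emeasure (lebesgue_Rd d) (PiE {..<d} (\<lambda>_. {-?e..?e})) \<le> emeasure (lebesgue_Rd d) (unit_ball d)"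
    by (intro emeasure_mono) auto
  moreover have "emeasure (lebesgue_Rd d) (PiE {..<d} (\<lambda>_. {-?e..?e})) = (\<Prod>i\<in>{..<d}. ennreal (2 / real d))"
    unfolding emeasure_box using d by simp
  moreover have "(\<Prod>i\<in>{..<d}. ennreal (2 / real d)) > 0" using d
    by (simp add: prod_ennreal ennreal_power)
  ultimately show ?thesis by auto
qed

definition "proj d w = restrict (\<lambda>i. w i / euclid_norm d w) {..<d}"

lemma proj_meas[measurable]: "proj d \<in> measurable (lebesgue_Rd d) (lebesgue_Rd d)"
  unfolding proj_def lebesgue_Rd_def euclid_norm_def by measurable

lemma sphere_eq: "uniform_sphere d = distr (uniform_measure (lebesgue_Rd d) (unit_ball d)) (lebesgue_Rd d) (proj d)"
  unfolding uniform_sphere_def proj_def ..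

lemma prob_sphere: "d \<ge> 1 \<Longrightarrow> prob_space (uniform_sphere d)"
proof -
  assume d: "d \<ge> 1"
  interpret U: prob_space "uniform_measure (lebesgue_Rd d) (unit_ball d)"
    by (rule prob_space_uniform_measure) (use ball_pos[OF d] ball_fin in auto)
  show ?thesis unfolding sphere_eq by (rule U.prob_space_distr) simp
qed



lemma AE_unit:
  assumes d: "d \<ge> 1"
  shows "AE w in uniform_sphere d. (\<Sum>i<d. (w i)^2) = 1"
proof -
  have Pm: "{w \<in> space (lebesgue_Rd d). (\<Sum>i<d. (w i)^2) = 1} \<in> sets (lebesgue_Rd d)"
    unfolding lebesgue_Rd_def by measurable
  have nz: "AE w in lebesgue_Rd d. \<exists>i<d. w i \<noteq> 0"
  proof (rule AE_I')
    interpret product_sigma_finite "\<lambda>_::nat. (lborel :: real measure)" by (rule psf_lborel)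
    let ?Z = "PiE {..<d} (\<lambda>_. {0::real})"
    have "emeasure (lebesgue_Rd d) ?Z = (\<Prod>i\<in>{..<d}. emeasure lborel {0::real})"
      unfolding lebesgue_Rd_def by (rule emeasure_PiM) auto
    also have "\<dots> = 0" using d by simp
    finally have z: "emeasure (lebesgue_Rd d) ?Z = 0" .
    moreover have "?Z \<in> sets (lebesgue_Rd d)" unfolding lebesgue_Rd_def by (rule sets_PiM_I_finite) auto
    ultimately show "?Z \<in> null_sets (lebesgue_Rd d)" by (rule null_setsI)
    show "{w \<in> space (lebesgue_Rd d). \<not> (\<exists>i<d. w i \<noteq> 0)} \<subseteq> ?Z"
      unfolding space_LRd PiE_def Pi_def by auto
  qed
  have "AE w in uniform_measure (lebesgue_Rd d) (unit_ball d). (\<Sum>i<d. (proj d w i)^2) = 1"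
  proof (rule AE_uniform_measureI[OF ball_sets])
    show "AE w in lebesgue_Rd d. w \<in> unit_ball d \<longrightarrow> (\<Sum>i<d. (proj d w i)^2) = 1"
      using nz
    proof (rule AE_mp, intro AE_I2 impI)
      fix w :: "nat \<Rightarrow> real" assume "\<exists>i<d. w i \<noteq> 0"
      then obtain j where j: "j < d" "w j \<noteq> 0" by auto
      define s where "s = (\<Sum>i<d. (w i)^2)"
      have "(w j)^2 \<le> s" unfolding s_def using member_le_sum[of j "{..<d}" "\<lambda>i. (w i)^2"] j by simp
      moreover have "(w j)^2 > 0" using j by simp
      ultimately have s0: "s > 0" by linarith
      have "(\<Sum>i<d. (proj d w i)^2) = (\<Sum>i<d. (w i)^2 / (sqrt s)^2)"
        unfolding proj_def euclid_norm_def s_def[symmetric] by (simp add: power_divide)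
      also have "\<dots> = s / s" using s0 by (simp add: sum_divide_distrib[symmetric] s_def)
      finally show "(\<Sum>i<d. (proj d w i)^2) = 1" using s0 by simp
    qed
  qed
  then show ?thesis unfolding sphere_eq by (subst AE_distr_iff) (auto intro: Pm)
qed



lemma pPZ_le:
  assumes "0 < c0" "c0 < sqrt 3 / 2"
  shows "p_PZ c0 \<le> (1 - c0^2)^2 / 6808"
proof -
  have "c0^2 < (sqrt 3 / 2)^2" using assms by (intro power_strict_mono) auto
  then have c2: "c0^2 < 3/4" by (simp add: power_divide)
  have a: "0 \<le> 1 - 4/3 * c0^2" using c2 by simp
  have b: "1 - 4/3 * c0^2 \<le> 1 - c0^2" by simp
  have sq: "(1 - 4/3 * c0^2)^2 \<le> (1 - c0^2)^2" using a b by (intro power_mono) auto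
  have "sqrt 2 \<le> sqrt (4::real)" by (rule real_sqrt_le_mono) simp
  then have s2: "sqrt 2 \<le> 2" by simp
  have "1 / sqrt 2 \<ge> 1 / 2" using s2 by (intro divide_left_mono) auto
  then have k: "1 - 1 / sqrt 2 \<le> 6561 / 6808" by linarith
  have k0: "0 \<le> 1 - 1 / sqrt 2" by simp
  have "p_PZ c0 = (1 - 1 / sqrt 2) * (1 - 4/3 * c0^2)^2 / 6561" unfolding p_PZ_def by simp
  also have "\<dots> \<le> (6561 / 6808) * (1 - c0^2)^2 / 6561"
    using k k0 sq by (intro divide_right_mono mult_mono) auto
  also have "\<dots> = (1 - c0^2)^2 / 6808" by simp
  finally show ?thesis .
qed

lemma pPZ_example: "p_PZ (sqrt (3/8)) = (2 - sqrt 2) / (8 * 3^8)"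
proof -
  have "(sqrt (3/8::real))^2 = 3/8" by simp
  moreover have "1 / sqrt 2 = sqrt 2 / 2" by (simp add: field_simps)
  ultimately show ?thesis unfolding p_PZ_def by (simp add: field_simps)
qed

lemma ucm_meas: "f \<in> borel_measurable (uniform_count_measure H)"
  unfolding measurable_def by (auto simp: sets_uniform_count_measure space_uniform_count_measure)

lemma snd_comp_meas:
  assumes "s < N"
  shows "(\<lambda>p. f (snd p s)) \<in> borel_measurable (M \<Otimes>\<^sub>M samples_measure d N)"
proof -
  have "(\<lambda>xs. xs s) \<in> measurable (samples_measure d N) (uniform_count_measure (hypercube d))"
    unfolding samples_measure_def using assms by (intro measurable_component_singleton) simp
  then have "(\<lambda>xs. f (xs s)) \<in> borel_measurable (samples_measure d N)"
    by (rule measurable_compose) (rule ucm_meas)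
  then show ?thesis by (rule measurable_compose[OF measurable_snd])
qed

lemma fst_comp_meas:
  assumes "i < d"
  shows "(\<lambda>p. fst p i) \<in> borel_measurable (uniform_sphere d \<Otimes>\<^sub>M M)"
proof -
  have "(\<lambda>w. w i) \<in> measurable (lebesgue_Rd d) lborel"
    unfolding lebesgue_Rd_def using assms by (intro measurable_component_singleton) simp
  then have "(\<lambda>w. w i) \<in> borel_measurable (lebesgue_Rd d)" by (simp add: measurable_lborel2)
  then have "(\<lambda>w. w i) \<in> borel_measurable (uniform_sphere d)"
    by (subst measurable_cong_sets[where M'="lebesgue_Rd d" and N'=borel]) (simp_all add: sphere_eq)
  then show ?thesis by (rule measurable_compose[OF measurable_fst])
qed

lemma q0_meas: "(\<lambda>p. q0 d N (fst p) (snd p)) \<in> borel_measurable (joint_measure d N)"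
  unfolding q0_def joint_measure_def
proof (intro borel_measurable_times borel_measurable_const borel_measurable_sum borel_measurable_power)
  fix s assume s: "s \<in> {..<N}"
  show "(\<lambda>p. label (snd p s)) \<in> borel_measurable (uniform_sphere d \<Otimes>\<^sub>M samples_measure d N)"
    using s by (intro snd_comp_meas) simp
  fix i assume i: "i \<in> {..<d}"
  show "(\<lambda>p. snd p s i) \<in> borel_measurable (uniform_sphere d \<Otimes>\<^sub>M samples_measure d N)"
    using s snd_comp_meas[of s N "\<lambda>x. x i"] by simp
  show "(\<lambda>p. fst p i) \<in> borel_measurable (uniform_sphere d \<Otimes>\<^sub>M samples_measure d N)"
    using i by (intro fst_comp_meas) simp
qed

theorem lemma4:
  fixes d N :: nat and c0 :: real
  assumes "d \<ge> 3" and "N \<ge> 1"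
    and "0 < c0" and "c0 < sqrt 3 / 2"
  shows "measure (joint_measure d N)
           {(w, xs) \<in> space (joint_measure d N). \<bar>q0 d N w xs\<bar> \<ge> c0 / sqrt (real N)}
         \<ge> p_PZ c0 \<and>
         p_PZ (sqrt (3/8)) = (2 - sqrt 2) / (8 * 3^8)"
proof
  show "p_PZ (sqrt (3/8)) = (2 - sqrt 2) / (8 * 3^8)" by (rule pPZ_example)
  have d1: "d \<ge> 1" and d2: "d \<ge> 2" using assms by auto
  have c01: "c0 < 1"
  proof -
    have "sqrt 3 < sqrt (4::real)" by (rule real_sqrt_less_mono) simp
    then have "sqrt 3 < (2::real)" by simp
    then show ?thesis using assms by simp
  qed
  define E where "E = {(w, xs) \<in> space (joint_measure d N). \<bar>q0 d N w xs\<bar> \<ge> c0 / sqrt (real N)}"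
  interpret S: prob_space "samples_measure d N" by (rule prob_samples)
  interpret W: prob_space "uniform_sphere d" by (rule prob_sphere[OF d1])
  have Jp: "prob_space (joint_measure d N)" unfolding joint_measure_def
    by (rule prob_space_pair) (unfold_locales)
  have Em: "E \<in> sets (joint_measure d N)"
  proof -
    have "E = {p \<in> space (joint_measure d N). c0 / sqrt (real N) \<le> \<bar>q0 d N (fst p) (snd p)\<bar>}"
      unfolding E_def by auto
    also have "\<dots> \<in> sets (joint_measure d N)"
      using q0_meas by measurable
    finally show ?thesis .
  qed
  have slice: "Pair w -` E = {xs \<in> PiE {..<N} (\<lambda>_. hypercube d). c0 / sqrt (real N) \<le> \<bar>q0 d N w xs\<bar>}"
    if "w \<in> space (uniform_sphere d)" for w
    using that unfolding E_def joint_measure_def by (auto simp: space_pair_measure space_samples)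
  have bound: "emeasure (samples_measure d N) (Pair w -` E) \<ge> ennreal (p_PZ c0)"
    if w: "w \<in> space (uniform_sphere d)" and u: "(\<Sum>i<d. (w i)^2) = 1" for w
  proof -
    interpret O: onesample d w using d2 u by unfold_locales
    have "emeasure (samples_measure d N) (Pair w -` E) =
        ennreal (real (card {xs \<in> O.Om N. c0 / sqrt (real N) \<le> \<bar>q0 d N w xs\<bar>}) / real (card (O.Om N)))"
      unfolding slice[OF w] O.Om_def by (rule emeasure_samples) auto
    also have "real (card (O.Om N)) = ((2::real)^d)^N" by (rule O.card_Om)
    finally have eq: "emeasure (samples_measure d N) (Pair w -` E) =
        ennreal (real (card {xs \<in> O.Om N. c0 / sqrt (real N) \<le> \<bar>q0 d N w xs\<bar>}) / ((2::real)^d)^N)" .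
    have "p_PZ c0 \<le> (1 - c0^2)^2 / 6808" by (rule pPZ_le) (use assms in auto)
    also have "\<dots> \<le> real (card {xs \<in> O.Om N. c0 / sqrt (real N) \<le> \<bar>q0 d N w xs\<bar>}) / ((2::real)^d)^N"
      by (rule O.finite_PZ) (use assms c01 in auto)
    finally show ?thesis unfolding eq by (rule ennreal_leI)
  qed
  have "ennreal (p_PZ c0) = (\<integral>\<^sup>+w. ennreal (p_PZ c0) \<partial>uniform_sphere d)"
    by (simp add: W.emeasure_space_1)
  also have "\<dots> \<le> (\<integral>\<^sup>+w. emeasure (samples_measure d N) (Pair w -` E) \<partial>uniform_sphere d)"
    by (rule nn_integral_mono_AE) (use AE_unit[OF d1] in \<open>rule AE_mp, auto intro!: AE_I2 bound\<close>)
  also have "\<dots> = emeasure (joint_measure d N) E"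
    unfolding joint_measure_def by (rule S.emeasure_pair_measure_alt[symmetric]) (use Em in \<open>simp add: joint_measure_def\<close>)
  also have "\<dots> = ennreal (measure (joint_measure d N) E)"
    using Jp by (simp add: finite_measure.emeasure_eq_measure prob_space_def)
  finally have "ennreal (p_PZ c0) \<le> ennreal (measure (joint_measure d N) E)" .
  then have "p_PZ c0 \<le> measure (joint_measure d N) E" by (simp add: measure_nonneg)
  then show "measure (joint_measure d N)
           {(w, xs) \<in> space (joint_measure d N). \<bar>q0 d N w xs\<bar> \<ge> c0 / sqrt (real N)}
         \<ge> p_PZ c0" unfolding E_def .
qed


end
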